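(* Let $\pi$ be a policy in a goal-conditioned MDP with discrete state space $\mathcal{S}$, fixed goal $s_g$ and discount factor $\gamma \in [0,1)$. For every state $s_0 \in \mathcal{S}$, $$V^\pi(s_0 \mid s_g) \;\geq\; \gamma^{\,d^\pi_T(s_0, s_g)}.$$
   Context: A goal-conditioned MDP has a discrete state space $\mathcal{S}$, discrete action space $\mathcal{A}$, goal-dependent transition kernel $P(\cdot \mid s, a, s_g)$, and discount factor $\gamma\in[0,1)$. The reward is $r(s_t,a_t,s_{t+1}\mid s_g)=\mathbb{I}[s_{t+1}=s_g]$, and on reaching the goal $s_g$ the process moves to an absorbing state with zero reward thereafter. A policy $\pi(\cdot\mid s, s_g)$ is a distribution over actions. For states $s, s_g$, let $T(s_g\mid \pi, s)$ be the random variable giving the first time-step at which $s_g$ is encountered when starting at $s$ and following $\pi$ (with actions $a\sim\pi(\cdot\mid s,s_g)$ and next states drawn from $P$). The time-step (quasi)metric is $d^\pi_T(s, s_g) := \mathbb{E}[T(s_g\mid\pi,s)]$. Under this reward the value of a state is $V^\pi(s\mid s_g) = \mathbb{E}\big[\gamma^{T(s_g\mid \pi, s)}\big]$. *)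

theory Defs
  imports "HOL-Probability.Probability"
begin

text \<open>Goal-conditioned MDP with state type 's and action type 'a.
  Transition kernel: P s a g is the distribution of the next state
  (goal-dependent).  Policy: pol s g is a distribution over actions.\<close>

definition step :: "('s \<Rightarrow> 's \<Rightarrow> 'a pmf) \<Rightarrow> ('s \<Rightarrow> 'a \<Rightarrow> 's \<Rightarrow> 's pmf) \<Rightarrow> 's \<Rightarrow> 's \<Rightarrow> 's pmf" where
  "step pol P g s = bind_pmf (pol s g) (\<lambda>a. P s a g)"

primrec traj :: "('s \<Rightarrow> 's \<Rightarrow> 'a pmf) \<Rightarrow> ('s \<Rightarrow> 'a \<Rightarrow> 's \<Rightarrow> 's pmf) \<Rightarrow> 's \<Rightarrow> 's \<Rightarrow> nat \<Rightarrow> 's list pmf" where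
  "traj pol P g s 0 = return_pmf [s]"
| "traj pol P g s (Suc n) = bind_pmf (step pol P g s) (\<lambda>s'. map_pmf (Cons s) (traj pol P g s' n))"

definition hit_prob :: "('s \<Rightarrow> 's \<Rightarrow> 'a pmf) \<Rightarrow> ('s \<Rightarrow> 'a \<Rightarrow> 's \<Rightarrow> 's pmf) \<Rightarrow> 's \<Rightarrow> 's \<Rightarrow> nat \<Rightarrow> real" where
  "hit_prob pol P g s n =
     measure_pmf.prob (traj pol P g s n) {xs. xs ! n = g \<and> (\<forall>i<n. xs ! i \<noteq> g)}"

text \<open>Time-step quasimetric d_T(s,g) = E[T(g | pol, s)] in [0, \<infinity>]; the event
  that g is never reached (T = \<infinity>) contributes \<infinity> times its probability.\<close>
definition dT :: "('s \<Rightarrow> 's \<Rightarrow> 'a pmf) \<Rightarrow> ('s \<Rightarrow> 'a \<Rightarrow> 's \<Rightarrow> 's pmf) \<Rightarrow> 's \<Rightarrow> 's \<Rightarrow> ennreal" where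
  "dT pol P s g =
     (\<Sum>n. ennreal (real n * hit_prob pol P g s n))
     + \<top> * ennreal (1 - (\<Sum>n. hit_prob pol P g s n))"

text \<open>Value V(s | g) = E[gamma ^ T(g | pol, s)], with gamma ^ \<infinity> = 0.\<close>
definition Val :: "('s \<Rightarrow> 's \<Rightarrow> 'a pmf) \<Rightarrow> ('s \<Rightarrow> 'a \<Rightarrow> 's \<Rightarrow> 's pmf) \<Rightarrow> real \<Rightarrow> 's \<Rightarrow> 's \<Rightarrow> real" where
  "Val pol P \<gamma> s g = (\<Sum>n. \<gamma> ^ n * hit_prob pol P g s n)"

text \<open>gamma raised to an extended nonnegative real exponent d, with the
  conventions gamma^\<infinity> = 0 (as 0 \<le> gamma < 1) and 0^0 = 1.\<close>
definition gpow :: "real \<Rightarrow> ennreal \<Rightarrow> real" where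
  "gpow \<gamma> d = (if d = \<top> then 0
                 else if \<gamma> = 0 then (if d = 0 then 1 else 0)
                 else \<gamma> powr enn2real d)"

end

theory Submission
  imports Defs
begin

lemma traj_take:
  "map_pmf (take (Suc n)) (traj pol P g s (n + k)) = traj pol P g s n"
proof (induction n arbitrary: s)
  case 0
  show ?case
  proof (cases k)
    case 0 then show ?thesis by simp
  next
    case (Suc k')
    then show ?thesis by (simp add: map_bind_pmf pmf.map_comp o_def bind_return_pmf')
  qed
next
  case (Suc n)
  have "map_pmf (take (Suc (Suc n))) (traj pol P g s (Suc n + k))
     = bind_pmf (step pol P g s) (\<lambda>s'. map_pmf (Cons s) (map_pmf (take (Suc n)) (traj pol P g s' (n + k))))"
    by (simp add: map_bind_pmf pmf.map_comp o_def)
  also have "\<dots> = traj pol P g s (Suc n)" using Suc.IH by simp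
  finally show ?case .
qed

definition hitset :: "'s \<Rightarrow> nat \<Rightarrow> 's list set" where
  "hitset g n = {xs. xs ! n = g \<and> (\<forall>i<n. xs ! i \<noteq> g)}"

lemma hit_prob_later:
  assumes "n \<le> N"
  shows "hit_prob pol P g s n = measure_pmf.prob (traj pol P g s N) (hitset g n)"
proof -
  obtain k where N: "N = n + k" using assms le_Suc_ex by blast
  have "hit_prob pol P g s n = measure_pmf.prob (map_pmf (take (Suc n)) (traj pol P g s N)) (hitset g n)"
    unfolding hit_prob_def hitset_def N traj_take by simp
  also have "\<dots> = measure_pmf.prob (traj pol P g s N) (take (Suc n) -` hitset g n)"
    by simp
  also have "take (Suc n) -` hitset g n = hitset g n"
    unfolding hitset_def by auto
  finally show ?thesis .
qed

lemma hit_prob_partial: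
  "(\<Sum>n\<le>N. hit_prob pol P g s n) \<le> 1"
proof -
  have "(\<Sum>n\<le>N. hit_prob pol P g s n) = (\<Sum>n\<le>N. measure_pmf.prob (traj pol P g s N) (hitset g n))"
    by (intro sum.cong refl hit_prob_later) auto
  also have "\<dots> = measure_pmf.prob (traj pol P g s N) (\<Union>n\<le>N. hitset g n)"
    by (rule measure_pmf.finite_measure_finite_Union[symmetric])
       (auto simp: disjoint_family_on_def hitset_def, metis linorder_neq_iff)
  also have "\<dots> \<le> 1" by simp
  finally show ?thesis .
qed

lemma hit_prob_summable: "summable (hit_prob pol P g s)"
  by (rule bounded_imp_summable[OF _ hit_prob_partial]) (simp add: hit_prob_def)

theorem proposition1:
  fixes pol :: "'s \<Rightarrow> 's \<Rightarrow> 'a pmf" and P :: "'s \<Rightarrow> 'a \<Rightarrow> 's \<Rightarrow> 's pmf"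
    and \<gamma> :: real and s\<^sub>g s\<^sub>0 :: 's
  assumes "0 \<le> \<gamma>" and "\<gamma> < 1"
  shows "Val pol P \<gamma> s\<^sub>0 s\<^sub>g \<ge> gpow \<gamma> (dT pol P s\<^sub>0 s\<^sub>g)"
proof -
  define h where "h n = hit_prob pol P s\<^sub>g s\<^sub>0 n" for n
  have h0: "h n \<ge> 0" for n unfolding h_def hit_prob_def by simp
  have V: "Val pol P \<gamma> s\<^sub>0 s\<^sub>g = (\<Sum>n. \<gamma> ^ n * h n)" unfolding Val_def h_def by simp
  have D: "dT pol P s\<^sub>0 s\<^sub>g = (\<Sum>n. ennreal (real n * h n)) + \<top> * ennreal (1 - (\<Sum>n. h n))"
    unfolding dT_def h_def by simp
  have sh0: "summable h" unfolding h_def by (rule hit_prob_summable)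
  have sV0: "summable (\<lambda>n. \<gamma> ^ n * h n)"
  proof (rule summable_comparison_test'[OF sh0])
    fix n
    have "\<gamma> ^ n \<le> 1" using assms by (simp add: power_le_one)
    then show "norm (\<gamma> ^ n * h n) \<le> h n"
      using h0[of n] assms by (simp add: abs_mult mult_left_le_one_le)
  qed
  have Vnn: "Val pol P \<gamma> s\<^sub>0 s\<^sub>g \<ge> 0"
    unfolding V using h0 assms(1) sV0 by (intro suminf_nonneg) auto
  show ?thesis
  proof (cases "summable h \<and> suminf h \<ge> 1")
    case False
    have "1 - (\<Sum>n. h n) > 0" using False sh0 by simp
    then have "dT pol P s\<^sub>0 s\<^sub>g = \<top>" unfolding D by (simp add: ennreal_top_mult)
    then show ?thesis using Vnn by (simp add: gpow_def)
  next
    case True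
    then have sh: "summable h" and p1: "suminf h \<ge> 1" by auto
    have D2: "dT pol P s\<^sub>0 s\<^sub>g = (\<Sum>n. ennreal (real n * h n))"
      unfolding D using p1 by (simp add: ennreal_eq_0_iff)
    show ?thesis
    proof (cases "(\<Sum>n. ennreal (real n * h n)) = \<top>")
      case True then show ?thesis using Vnn D2 by (simp add: gpow_def)
    next
      case False
      have nn: "\<And>n. real n * h n \<ge> 0" using h0 by simp
      have sD: "summable (\<lambda>n. real n * h n)"
        using summable_suminf_not_top[OF nn False] .
      define d where "d = (\<Sum>n. real n * h n)"
      have d0: "d \<ge> 0" unfolding d_def using sD nn by (simp add: suminf_nonneg)
      have Deq: "dT pol P s\<^sub>0 s\<^sub>g = ennreal d"
        unfolding D2 d_def using suminf_ennreal2[OF nn sD] by simp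
      have sV: "summable (\<lambda>n. \<gamma> ^ n * h n)"
      proof (rule summable_comparison_test'[OF sh])
        fix n
        have "\<gamma> ^ n \<le> 1" using assms by (simp add: power_le_one)
        then show "norm (\<gamma> ^ n * h n) \<le> h n"
          using h0[of n] assms by (simp add: abs_mult mult_left_le_one_le)
      qed
      show ?thesis
      proof (cases "\<gamma> = 0")
        case True
        show ?thesis
        proof (cases "d = 0")
          case False then show ?thesis using Deq Vnn d0 \<open>\<gamma> = 0\<close> by (simp add: gpow_def)
        next
          case d00: True
          have hz: "h n = 0" if "n > 0" for n
          proof -
            have "real n * h n = 0"
              using suminf_eq_zero_iff[OF sD nn] d00 unfolding d_def by auto
            then show ?thesis using that by simp
          qed
          have "h sums h 0"
            by (rule sums_single[where i=0, THEN sums_cong[THEN iffD1, rotated]]) (auto simp: hz)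
          then have "suminf h = h 0" by (simp add: sums_iff)
          have "(\<lambda>n. \<gamma> ^ n * h n) sums h 0"
            by (rule sums_single[where i=0, THEN sums_cong[THEN iffD1, rotated]]) (auto simp: \<open>\<gamma> = 0\<close>)
          then have "(\<Sum>n. \<gamma> ^ n * h n) = h 0" by (simp add: sums_iff)
          then show ?thesis using Deq d00 \<open>\<gamma> = 0\<close> p1 \<open>suminf h = h 0\<close> unfolding V by (simp add: gpow_def)
        qed
      next
        case False
        then have g0: "\<gamma> > 0" using assms by simp
        define c where "c = \<gamma> powr d"
        have c0: "c > 0" using g0 unfolding c_def by simp
        have tang: "\<gamma> ^ n \<ge> c * (1 + (real n - d) * ln \<gamma>)" for n
        proof -
          have "\<gamma> ^ n = \<gamma> powr real n" using g0 by (simp add: powr_realpow)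
          also have "\<dots> = c * exp ((real n - d) * ln \<gamma>)"
            unfolding c_def using g0 by (simp add: powr_def exp_add[symmetric] algebra_simps)
          also have "\<dots> \<ge> c * (1 + (real n - d) * ln \<gamma>)"
            using c0 exp_ge_add_one_self[of "(real n - d) * ln \<gamma>"]
            by (intro mult_left_mono) auto
          finally show ?thesis .
        qed
        have s1: "(\<lambda>n. c * (1 + (real n - d) * ln \<gamma>) * h n) sums
                  (c * (suminf h + ln \<gamma> * d - d * ln \<gamma> * suminf h))"
        proof -
          have "(\<lambda>n. c * h n + c * ln \<gamma> * (real n * h n) - c * d * ln \<gamma> * h n) sums
                (c * suminf h + c * ln \<gamma> * d - c * d * ln \<gamma> * suminf h)"
            unfolding d_def
            by (intro sums_diff sums_add sums_mult summable_sums sh sD)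
          then show ?thesis by (simp add: algebra_simps)
        qed
        have "c * (suminf h + ln \<gamma> * d - d * ln \<gamma> * suminf h) \<le> (\<Sum>n. \<gamma> ^ n * h n)"
          using s1 sV tang h0 by (intro sums_le[OF _ s1 summable_sums[OF sV]]) (simp add: mult_right_mono)
        moreover have "c \<le> c * (suminf h + ln \<gamma> * d - d * ln \<gamma> * suminf h)"
        proof -
          have "ln \<gamma> \<le> 0" using g0 assms by simp
          then have "ln \<gamma> * d * (1 - suminf h) \<ge> 0" using d0 p1
            by (intro mult_nonpos_nonpos mult_nonpos_nonneg) auto
          then have "1 \<le> suminf h + ln \<gamma> * d - d * ln \<gamma> * suminf h" using p1
            by (simp add: algebra_simps)
          then show ?thesis using c0 by simp
        qed
        ultimately have "c \<le> (\<Sum>n. \<gamma> ^ n * h n)" by linarith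
        moreover have "gpow \<gamma> (dT pol P s\<^sub>0 s\<^sub>g) = c"
          using Deq False d0 by (simp add: gpow_def c_def)
        ultimately show ?thesis unfolding V by simp
      qed
    qed
  qed
qed

end
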